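(* Let $A$ be a wqo such that $\mathbf{w}(A)\ge\omega$ is additively indecomposable. Then $A$ has a substructure $C$ with $\mathbf{w}(C)=\mathbf{w}(A)$ which is transferable.
   Context: A wqo is a quasi-order in which every infinite sequence $x_0,x_1,\dots$ has $i<j$ with $x_i\le x_j$. $\mathbf{w}(A)$ (width) is the rank of the root of the well-founded tree of finite sequences of pairwise incomparable elements of $A$ (root: empty sequence, children: one-element extensions; rank $r(s)=\sup\{r(t)+1: t\text{ child of } s\}$). An ordinal is additively indecomposable if it is of the form $\omega^\gamma$. A substructure is a subset with the restricted ordering. A wqo $C$ is transferable if for every finite set $\{x_1,\dots,x_n\}\subseteq C$, the substructure $\{y\in C : y\not\le x_i \text{ for all } i\}$ has width $\mathbf{w}(C)$. *)

theory Defs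
  imports Main
begin

definition wqo_on :: "('a \<Rightarrow> 'a \<Rightarrow> bool) \<Rightarrow> 'a set \<Rightarrow> bool" where
  "wqo_on le A \<longleftrightarrow>
     (\<forall>x\<in>A. le x x) \<and>
     (\<forall>x\<in>A. \<forall>y\<in>A. \<forall>z\<in>A. le x y \<longrightarrow> le y z \<longrightarrow> le x z) \<and>
     (\<forall>f :: nat \<Rightarrow> 'a. (\<forall>i. f i \<in> A) \<longrightarrow> (\<exists>i j. i < j \<and> le (f i) (f j)))"

definition incomp :: "('a \<Rightarrow> 'a \<Rightarrow> bool) \<Rightarrow> 'a \<Rightarrow> 'a \<Rightarrow> bool" where
  "incomp le x y \<longleftrightarrow> \<not> le x y \<and> \<not> le y x"

text \<open>Nodes of the tree of finite sequences of pairwise incomparable elements of B.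
  The root is [], the children of s are the one-element extensions s @ [x].\<close>
definition antichain_seqs :: "('a \<Rightarrow> 'a \<Rightarrow> bool) \<Rightarrow> 'a set \<Rightarrow> 'a list set" where
  "antichain_seqs le B =
     {xs. set xs \<subseteq> B \<and>
          (\<forall>i<length xs. \<forall>j<length xs. i \<noteq> j \<longrightarrow> incomp le (xs ! i) (xs ! j))}"

text \<open>Comparison of ranks of nodes of two trees (given by prefix-closed node sets, children
  being one-element extensions).  Since r(s) = sup {r(t)+1 : t child of s}, we have
  r(s) \<le> r(s') iff every child t of s satisfies r(t) < r(s'), i.e. iff for every child t of s
  there is a child t' of s' with r(t) \<le> r(t').  This is the defining recursion of the rank,
  unfolded; on well-founded trees the inductive relation is the rank comparison.\<close>
inductive rank_le :: "'a list set \<Rightarrow> 'b list set \<Rightarrow> 'a list \<Rightarrow> 'b list \<Rightarrow> bool"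
  for T :: "'a list set" and T' :: "'b list set" where
  "(\<forall>x. s @ [x] \<in> T \<longrightarrow> (\<exists>y. s' @ [y] \<in> T' \<and> rank_le T T' (s @ [x]) (s' @ [y])))
     \<Longrightarrow> rank_le T T' s s'"

text \<open>The width w(B) as an ordinal, i.e. a well-order (up to =o): the ranks of the non-root
  nodes are exactly the ordinals below the rank of the root, so the set of non-root nodes
  modulo equal rank, ordered by rank, has order type r([]) = w(B).\<close>
definition width_ord :: "('a \<Rightarrow> 'a \<Rightarrow> bool) \<Rightarrow> 'a set \<Rightarrow> ('a list set) rel" where
  "width_ord le B =
     (let T = antichain_seqs le B;
          P = T - {[]};
          E = {(s, t). s \<in> P \<and> t \<in> P \<and> rank_le T T s t \<and> rank_le T T t s}
      in {(X, Y). X \<in> P // E \<and> Y \<in> P // E \<and> (\<exists>s\<in>X. \<exists>t\<in>Y. rank_le T T s t)})"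

text \<open>omega_exp g is the well-order \<omega>^g (Cantor normal form representation): finitely
  supported functions from Field g to nat, compared at the g-largest point of difference.\<close>
definition omega_exp :: "'c rel \<Rightarrow> ('c \<Rightarrow> nat) rel" where
  "omega_exp g =
     (let F = {f. finite {x. f x \<noteq> 0} \<and> {x. f x \<noteq> 0} \<subseteq> Field g}
      in {(f, h). f \<in> F \<and> h \<in> F \<and>
            (f = h \<or> (\<exists>x. f x < h x \<and> (\<forall>y. f y \<noteq> h y \<longrightarrow> (y, x) \<in> g)))})"

text \<open>An ordinal (well-order) is additively indecomposable if it is of the form \<omega>^\<gamma>.
  (\<gamma> \<le> \<omega>^\<gamma>, so \<gamma> can be taken on the same carrier type.)\<close>
definition add_indecomposable :: "'b rel \<Rightarrow> bool" where
  "add_indecomposable \<alpha> \<longleftrightarrow> (\<exists>\<gamma> :: 'b rel. Well_order \<gamma> \<and> (\<alpha>, omega_exp \<gamma>) \<in> ordIso)"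

definition transferable :: "('a \<Rightarrow> 'a \<Rightarrow> bool) \<Rightarrow> 'a set \<Rightarrow> bool" where
  "transferable le C \<longleftrightarrow>
     (\<forall>F. finite F \<and> F \<subseteq> C \<longrightarrow>
        (width_ord le {y \<in> C. \<forall>x\<in>F. \<not> le y x}, width_ord le C) \<in> ordIso)"

end

theory Submission
  imports Defs
begin


lemma rank_le_unfold: "rank_le T T' s s' \<longleftrightarrow> (\<forall>x. s @ [x] \<in> T \<longrightarrow> (\<exists>y. s' @ [y] \<in> T' \<and> rank_le T T' (s @ [x]) (s' @ [y])))"
  by (subst rank_le.simps) auto

lemma rank_le_trans: "rank_le T T a b \<Longrightarrow> rank_le T T b c \<Longrightarrow> rank_le T T a c"
proof (induction a b arbitrary: c rule: rank_le.induct)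
  case (1 s s')
  show ?case
  proof (subst rank_le_unfold, intro allI impI)
    fix x assume "s @ [x] \<in> T"
    then obtain y where y: "s' @ [y] \<in> T" "rank_le T T (s @ [x]) (s' @ [y])"
      "\<forall>c. rank_le T T (s' @ [y]) c \<longrightarrow> rank_le T T (s @ [x]) c" using 1(1) by blast
    obtain z where "c @ [z] \<in> T" "rank_le T T (s' @ [y]) (c @ [z])"
      using 1(2) y(1) rank_le_unfold by metis
    then show "\<exists>z. c @ [z] \<in> T \<and> rank_le T T (s @ [x]) (c @ [z])" using y(3) by blast
  qed
qed

locale wtree =
  fixes T :: "'a list set"
  assumes pre: "\<And>s a. s @ [a] \<in> T \<Longrightarrow> s \<in> T"
    and wfch: "wf {(s @ [a], s) | s a. s @ [a] \<in> T}"
begin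

abbreviation rl where "rl \<equiv> rank_le T T"

lemma ch_induct:
  assumes "\<And>s. (\<And>a. s @ [a] \<in> T \<Longrightarrow> P (s @ [a])) \<Longrightarrow> P s"
  shows "P s"
  using wfch
proof (induction s rule: wf_induct_rule)
  case (less x)
  then show ?case using assms by blast
qed

lemma rl_refl: "rl s s"
proof (induction s rule: ch_induct)
  case (1 s)
  then show ?case by (subst rank_le_unfold) blast
qed

lemma rl_child: "s @ [x] \<in> T \<Longrightarrow> rl (s @ [x]) s"
proof (induction s arbitrary: x rule: ch_induct)
  case (1 s)
  show ?case
  proof (subst rank_le_unfold, intro allI impI)
    fix z assume "(s @ [x]) @ [z] \<in> T"
    then have "rl ((s @ [x]) @ [z]) (s @ [x])" using 1(1)[of x z] 1(2) by simp
    then show "\<exists>y. s @ [y] \<in> T \<and> rl ((s @ [x]) @ [z]) (s @ [y])"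
      using 1(2) by auto
  qed
qed

lemma rl_child_strict: "s @ [x] \<in> T \<Longrightarrow> \<not> rl s (s @ [x])"
proof (induction s arbitrary: x rule: ch_induct)
  case (1 s)
  show ?case
  proof
    assume "rl s (s @ [x])"
    then obtain w where "s @ [x] @ [w] \<in> T" "rl (s @ [x]) (s @ [x] @ [w])"
      using 1(2) rank_le_unfold by (metis append_assoc)
    then show False using 1(1)[of x w] 1(2) by simp
  qed
qed

lemma rl_total: "rl s t \<or> rl t s"
proof (induction s arbitrary: t rule: ch_induct)
  case (1 s)
  show ?case
  proof (rule disjCI)
    assume "\<not> rl t s"
    then obtain y where y: "t @ [y] \<in> T" "\<forall>x. s @ [x] \<in> T \<longrightarrow> \<not> rl (t @ [y]) (s @ [x])"
      using rank_le_unfold by metis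
    show "rl s t"
    proof (subst rank_le_unfold, intro allI impI)
      fix x assume "s @ [x] \<in> T"
      then show "\<exists>y. t @ [y] \<in> T \<and> rl (s @ [x]) (t @ [y])" using y 1 by blast
    qed
  qed
qed

lemma rl_Q: "(\<And>w. a @ [w] \<in> T \<Longrightarrow> \<not> rl c (a @ [w])) \<Longrightarrow> rl a c"
proof (induction a arbitrary: c rule: ch_induct)
  case (1 a)
  show ?case
  proof (subst rank_le_unfold, intro allI impI)
    fix w assume w: "a @ [w] \<in> T"
    then have "\<not> rl c (a @ [w])" using 1(2) by blast
    then obtain v where v: "c @ [v] \<in> T" "\<forall>u. a @ [w] @ [u] \<in> T \<longrightarrow> \<not> rl (c @ [v]) (a @ [w] @ [u])"
      using rank_le_unfold[of T T c "a @ [w]"] by auto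
    have "rl (a @ [w]) (c @ [v])" using 1(1)[OF w] v(2) by (metis append_assoc)
    then show "\<exists>y. c @ [y] \<in> T \<and> rl (a @ [w]) (c @ [y])" using v(1) by blast
  qed
qed

lemma rl_Q': "\<not> rl c a \<Longrightarrow> \<exists>v. c @ [v] \<in> T \<and> rl a (c @ [v])"
proof -
  assume "\<not> rl c a"
  then obtain v where v: "c @ [v] \<in> T" "\<forall>w. a @ [w] \<in> T \<longrightarrow> \<not> rl (c @ [v]) (a @ [w])"
    using rank_le_unfold[of T T c a] by auto
  then show ?thesis using rl_Q[of a "c @ [v]"] by blast
qed

lemma rl_wf: "wf {(t, s). \<not> rl s t}"
proof -
  let ?R = "{(t, s). \<not> rl s t}"
  have "\<forall>t. rl t s \<longrightarrow> t \<in> Wellfounded.acc ?R" for s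
  proof (induction s rule: ch_induct)
    case (1 s)
    show ?case
    proof (intro allI impI)
      fix t assume ts: "rl t s"
      show "t \<in> Wellfounded.acc ?R"
      proof (rule accI)
        fix u assume "(u, t) \<in> ?R"
        then have "\<not> rl t u" by simp
        then have "\<not> rl s u" using ts rank_le_trans by blast
        then obtain v where "s @ [v] \<in> T" "rl u (s @ [v])" using rl_Q' by blast
        then show "u \<in> Wellfounded.acc ?R" using 1 by blast
      qed
    qed
  qed
  then have "\<forall>t. t \<in> Wellfounded.acc ?R" using rl_refl by blast
  then show ?thesis by (rule acc_wfI)
qed

lemma pre_gen: "u @ v \<in> T \<Longrightarrow> u \<in> T"
proof (induction v rule: rev_induct)
  case (snoc a v)
  then have "(u @ v) @ [a] \<in> T" by simp
  then show ?case using snoc pre by blast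
qed simp

lemma rl_desc: "u @ v \<in> T \<Longrightarrow> rl (u @ v) u"
proof (induction v rule: rev_induct)
  case Nil then show ?case by (simp add: rl_refl)
next
  case (snoc a v)
  then have "(u @ v) @ [a] \<in> T" by simp
  then show ?case using snoc pre rl_child rank_le_trans by (metis append_assoc)
qed

lemma root_strict: "t \<in> T \<Longrightarrow> t \<noteq> [] \<Longrightarrow> \<not> rl [] t"
proof
  assume "t \<in> T" "t \<noteq> []" "rl [] t"
  then obtain a v where t: "t = [a] @ v" by (cases t) auto
  then have "[a] \<in> T" using \<open>t \<in> T\<close> pre_gen by blast
  have "rl t [a]" using rl_desc \<open>t \<in> T\<close> t by blast
  then have "rl [] [a]" using \<open>rl [] t\<close> rank_le_trans by blast
  then show False using rl_child_strict[of "[]" a] \<open>[a] \<in> T\<close> by simp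
qed

end



definition wo :: "'a list set \<Rightarrow> ('a list set) rel" where
  "wo T = (let P = T - {[]};
          E = {(s, t). s \<in> P \<and> t \<in> P \<and> rank_le T T s t \<and> rank_le T T t s}
      in {(X, Y). X \<in> P // E \<and> Y \<in> P // E \<and> (\<exists>s\<in>X. \<exists>t\<in>Y. rank_le T T s t)})"

lemma width_ord_wo: "width_ord le B = wo (antichain_seqs le B)"
  by (simp add: width_ord_def wo_def Let_def)

definition labels :: "'w rel \<Rightarrow> 'a list set \<Rightarrow> ('a list \<Rightarrow> 'w) \<Rightarrow> bool" where
  "labels W T \<phi> \<longleftrightarrow> (\<forall>s\<in>T. \<phi> s \<in> Field W) \<and>
     (\<forall>s a. s @ [a] \<in> T \<longrightarrow> (\<phi> (s @ [a]), \<phi> s) \<in> W \<and> \<phi> (s @ [a]) \<noteq> \<phi> s)"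

context wtree
begin

definition "PP = T - {[]}"
definition "EE = {(s, t). s \<in> PP \<and> t \<in> PP \<and> rl s t \<and> rl t s}"
definition "cls s = EE `` {s}"

lemma wo_iff: "(X, Y) \<in> wo T \<longleftrightarrow> X \<in> PP // EE \<and> Y \<in> PP // EE \<and> (\<exists>s\<in>X. \<exists>t\<in>Y. rl s t)"
  by (simp add: wo_def PP_def EE_def Let_def)

lemma cls_mem: "t \<in> cls s \<longleftrightarrow> s \<in> PP \<and> t \<in> PP \<and> rl s t \<and> rl t s"
  by (auto simp: cls_def EE_def)

lemma cls_in: "s \<in> PP \<Longrightarrow> cls s \<in> PP // EE"
  unfolding cls_def by (rule quotientI)

lemma quot_cls: "X \<in> PP // EE \<Longrightarrow> \<exists>s\<in>PP. X = cls s"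
  unfolding cls_def by (erule quotientE) blast

lemma cls_self: "s \<in> PP \<Longrightarrow> s \<in> cls s"
  using cls_mem rl_refl by blast

lemma cls_eq: "s \<in> PP \<Longrightarrow> t \<in> PP \<Longrightarrow> cls s = cls t \<longleftrightarrow> rl s t \<and> rl t s"
proof
  assume "s \<in> PP" "t \<in> PP" "cls s = cls t"
  then have "t \<in> cls s" using cls_self by blast
  then show "rl s t \<and> rl t s" using cls_mem by blast
next
  assume "s \<in> PP" "t \<in> PP" "rl s t \<and> rl t s"
  then show "cls s = cls t" using cls_mem rank_le_trans by blast
qed

lemma mem_cls_eq: "t \<in> cls s \<Longrightarrow> cls t = cls s"
  using cls_eq cls_mem by blast

lemma wo_cls: "s \<in> PP \<Longrightarrow> t \<in> PP \<Longrightarrow> (cls s, cls t) \<in> wo T \<longleftrightarrow> rl s t"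
proof
  assume st: "s \<in> PP" "t \<in> PP" and "(cls s, cls t) \<in> wo T"
  then obtain s' t' where "s' \<in> cls s" "t' \<in> cls t" "rl s' t'" using wo_iff by blast
  then show "rl s t" using cls_mem rank_le_trans by metis
next
  assume st: "s \<in> PP" "t \<in> PP" and "rl s t"
  then show "(cls s, cls t) \<in> wo T" using wo_iff cls_in cls_self by blast
qed

lemma Field_wo: "Field (wo T) = PP // EE"
proof
  show "Field (wo T) \<subseteq> PP // EE" unfolding Field_def using wo_iff by blast
next
  show "PP // EE \<subseteq> Field (wo T)"
  proof
    fix X assume "X \<in> PP // EE"
    then obtain s where "s \<in> PP" "X = cls s" using quot_cls by blast
    then have "(X, X) \<in> wo T" using wo_cls rl_refl by blast
    then show "X \<in> Field (wo T)" unfolding Field_def by blast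
  qed
qed

lemma Well_order_wo: "Well_order (wo T)"
proof -
  have sub: "wo T \<subseteq> Field (wo T) \<times> Field (wo T)" by (force simp: Field_def)
  have refl: "refl_on (Field (wo T)) (wo T)"
    unfolding refl_on_def Field_wo using quot_cls wo_cls rl_refl by metis
  have trans: "trans (wo T)"
  proof (rule transI)
    fix X Y Z assume a: "(X, Y) \<in> wo T" "(Y, Z) \<in> wo T"
    then obtain s t u where "s \<in> PP" "t \<in> PP" "u \<in> PP" "X = cls s" "Y = cls t" "Z = cls u"
      using wo_iff quot_cls by metis
    then show "(X, Z) \<in> wo T" using a wo_cls rank_le_trans by metis
  qed
  have anti: "antisym (wo T)"
  proof (rule antisymI)
    fix X Y assume a: "(X, Y) \<in> wo T" "(Y, X) \<in> wo T"
    then obtain s t where "s \<in> PP" "t \<in> PP" "X = cls s" "Y = cls t"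
      using wo_iff quot_cls by metis
    then show "X = Y" using a wo_cls cls_eq by metis
  qed
  have tot: "total_on (Field (wo T)) (wo T)"
    unfolding total_on_def Field_wo using quot_cls wo_cls rl_total by metis
  define rep where "rep X = (SOME s. s \<in> PP \<and> X = cls s)" for X
  have rep: "X \<in> PP // EE \<Longrightarrow> rep X \<in> PP \<and> X = cls (rep X)" for X
    unfolding rep_def using quot_cls by (metis (mono_tags, lifting) someI_ex)
  have "wo T - Id \<subseteq> inv_image {(t, s). \<not> rl s t} rep"
  proof
    fix p assume p: "p \<in> wo T - Id"
    obtain X Y where XY0: "p = (X, Y)" by (cases p)
    then have XY: "p = (X, Y)" "(X, Y) \<in> wo T" "X \<noteq> Y" using p by auto
    then have "X \<in> PP // EE" "Y \<in> PP // EE" using wo_iff by auto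
    then have "rep X \<in> PP" "X = cls (rep X)" "rep Y \<in> PP" "Y = cls (rep Y)" using rep by auto
    then have "\<not> rl (rep Y) (rep X)" using XY wo_cls cls_eq by metis
    then show "p \<in> inv_image {(t, s). \<not> rl s t} rep" using XY by simp
  qed
  then have "wf (wo T - Id)" using wf_subset wf_inv_image rl_wf by blast
  then show ?thesis
    unfolding well_order_on_def linear_order_on_def partial_order_on_def preorder_on_def
    using sub refl trans anti tot by blast
qed

lemma G2:
  assumes "(wo T, W) \<in> ordLess"
  shows "\<exists>\<phi>. labels W T \<phi>"
proof -
  obtain f where f: "embedS (wo T) W f" and WW: "Well_order W"
    using assms unfolding ordLess_def by blast
  have emb: "embed (wo T) W f" using f embedS_def by blast
  have inj: "inj_on f (Field (wo T))" using embed_inj_on[OF Well_order_wo emb] .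
  have cmp: "compat (wo T) W f" using embed_compat[OF emb] .
  have img: "f ` Field (wo T) \<subseteq> Field W" using embed_Field[OF emb] .
  have "\<not> bij_betw f (Field (wo T)) (Field W)" using f embedS_def by blast
  then have "f ` Field (wo T) \<noteq> Field W" using inj bij_betw_def by blast
  then obtain w where w: "w \<in> Field W" "w \<notin> f ` Field (wo T)" using img by blast
  have ofi: "ofilter W (f ` Field (wo T))" using embed_Field_ofilter[OF Well_order_wo WW emb] by simp
  have totW: "total_on (Field W) W" using WW
    unfolding well_order_on_def linear_order_on_def by blast
  have above: "v \<in> f ` Field (wo T) \<Longrightarrow> (v, w) \<in> W \<and> v \<noteq> w" for v
  proof -
    assume v: "v \<in> f ` Field (wo T)"
    then have "v \<in> Field W" using img by blast
    moreover have "(w, v) \<notin> W" using ofi v w unfolding ofilter_def under_def by blast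
    moreover have "v \<noteq> w" using v w(2) by blast
    ultimately show ?thesis using totW w(1) unfolding total_on_def by metis
  qed
  define \<phi> where "\<phi> s = (if s = [] then w else f (cls s))" for s
  have "labels W T \<phi>"
    unfolding labels_def
  proof (rule conjI; intro allI impI ballI)
    fix s assume "s \<in> T"
    then show "\<phi> s \<in> Field W"
      using w img cls_in Field_wo unfolding \<phi>_def PP_def by auto
  next
    fix s a assume sa: "s @ [a] \<in> T"
    then have P1: "s @ [a] \<in> PP" unfolding PP_def by simp
    have im: "f (cls (s @ [a])) \<in> f ` Field (wo T)" using P1 cls_in Field_wo by blast
    show "(\<phi> (s @ [a]), \<phi> s) \<in> W \<and> \<phi> (s @ [a]) \<noteq> \<phi> s"
    proof (cases "s = []")
      case True
      then show ?thesis using above[OF im] unfolding \<phi>_def by simp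
    next
      case False
      then have P2: "s \<in> PP" using pre sa unfolding PP_def by blast
      have "(cls (s @ [a]), cls s) \<in> wo T" using wo_cls P1 P2 rl_child sa by blast
      then have "(f (cls (s @ [a])), f (cls s)) \<in> W" using cmp unfolding compat_def by blast
      moreover have "cls (s @ [a]) \<noteq> cls s" using cls_eq P1 P2 rl_child_strict sa by blast
      then have "f (cls (s @ [a])) \<noteq> f (cls s)"
        using inj P1 P2 cls_in Field_wo unfolding inj_on_def by metis
      ultimately show ?thesis unfolding \<phi>_def using False by simp
    qed
  qed
  then show ?thesis by blast
qed

lemma G1:
  assumes root: "[] \<in> T" and lab: "labels W T \<phi>" and WW: "Well_order W"
  shows "(wo T, W) \<in> ordLess"
proof -
  have "(W, wo T) \<notin> ordLeq"
  proof
    assume "(W, wo T) \<in> ordLeq"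
    then obtain g where emb: "embed W (wo T) g" unfolding ordLeq_def by blast
    have inj: "inj_on g (Field W)" using embed_inj_on[OF WW emb] .
    have cmp: "compat W (wo T) g" using embed_compat[OF emb] .
    have img: "g ` Field W \<subseteq> PP // EE" using embed_Field[OF emb] Field_wo by simp
    have claim: "s \<in> T \<longrightarrow> (\<forall>t\<in>g (\<phi> s). rl s t)" for s
    proof (induction s rule: ch_induct)
      case (1 s)
      show ?case
      proof (intro impI ballI)
        fix t assume sT: "s \<in> T" and t: "t \<in> g (\<phi> s)"
        have phis: "\<phi> s \<in> Field W" using lab sT unfolding labels_def by blast
        then have "g (\<phi> s) \<in> PP // EE" using img by blast
        then obtain s0 where "s0 \<in> PP" "g (\<phi> s) = cls s0" using quot_cls by blast
        then have gs: "g (\<phi> s) = cls t" "t \<in> PP" using t mem_cls_eq cls_mem by auto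
        show "rl s t"
        proof (subst rank_le_unfold, intro allI impI)
          fix x assume sx: "s @ [x] \<in> T"
          have phisx: "\<phi> (s @ [x]) \<in> Field W" using lab sx unfolding labels_def by blast
          have lt: "(\<phi> (s @ [x]), \<phi> s) \<in> W" "\<phi> (s @ [x]) \<noteq> \<phi> s"
            using lab sx unfolding labels_def by auto
          have "g (\<phi> (s @ [x])) \<in> PP // EE" using img phisx by blast
          then obtain t' where t': "t' \<in> PP" "g (\<phi> (s @ [x])) = cls t'" using quot_cls by blast
          have "(cls t', cls t) \<in> wo T" using cmp lt t' gs unfolding compat_def by metis
          then have "rl t' t" using wo_cls t' gs by blast
          have "g (\<phi> (s @ [x])) \<noteq> g (\<phi> s)" using inj lt phis phisx unfolding inj_on_def by metis
          then have "\<not> rl t t'" using cls_eq[OF t'(1) gs(2)] t'(2) gs(1) \<open>rl t' t\<close> by metis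
          have "rl (s @ [x]) t'" using 1[OF sx] sx t' cls_self by metis
          then have "\<not> rl t (s @ [x])" using \<open>\<not> rl t t'\<close> rank_le_trans by blast
          then show "\<exists>y. t @ [y] \<in> T \<and> rl (s @ [x]) (t @ [y])" using rl_Q' by blast
        qed
      qed
    qed
    have "\<phi> [] \<in> Field W" using lab root unfolding labels_def by blast
    then have "g (\<phi> []) \<in> PP // EE" using img by blast
    then obtain t where t: "t \<in> PP" "g (\<phi> []) = cls t" using quot_cls by blast
    then have "rl [] t" using claim root cls_self by metis
    then show False using root_strict t unfolding PP_def by blast
  qed
  then show ?thesis using not_ordLeq_iff_ordLess[OF Well_order_wo WW] by blast
qed

end



lemma incomp_sym: "incomp le a b = incomp le b a"
  by (auto simp: incomp_def)

lemma antichain_alt: "antichain_seqs le B = {xs. set xs \<subseteq> B \<and> sorted_wrt (incomp le) xs}"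
proof -
  have "(\<forall>i<length xs. \<forall>j<length xs. i \<noteq> j \<longrightarrow> incomp le (xs ! i) (xs ! j)) \<longleftrightarrow>
        sorted_wrt (incomp le) xs" for xs
    unfolding sorted_wrt_iff_nth_less
  proof (intro iffI allI impI)
    fix i j assume "\<forall>i<length xs. \<forall>j<length xs. i \<noteq> j \<longrightarrow> incomp le (xs ! i) (xs ! j)" "i < j" "j < length xs"
    then show "incomp le (xs ! i) (xs ! j)" by auto
  next
    fix i j assume H: "\<forall>i j. i < j \<longrightarrow> j < length xs \<longrightarrow> incomp le (xs ! i) (xs ! j)"
      and ij: "i < length xs" "j < length xs" "i \<noteq> j"
    show "incomp le (xs ! i) (xs ! j)"
    proof (cases "i < j")
      case True then show ?thesis using H ij by blast
    next
      case False then have "j < i" using ij by simp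
      then show ?thesis using H ij incomp_sym by metis
    qed
  qed
  then show ?thesis unfolding antichain_seqs_def by blast
qed

lemma ac_mem: "xs \<in> antichain_seqs le B \<longleftrightarrow> set xs \<subseteq> B \<and> sorted_wrt (incomp le) xs"
  by (simp add: antichain_alt)

lemma ac_nil: "[] \<in> antichain_seqs le B"
  by (simp add: ac_mem)

lemma ac_pre: "s @ [a] \<in> antichain_seqs le B \<Longrightarrow> s \<in> antichain_seqs le B"
  by (simp add: ac_mem sorted_wrt_append)

lemma ac_mono: "X \<subseteq> Y \<Longrightarrow> antichain_seqs le X \<subseteq> antichain_seqs le Y"
  unfolding antichain_alt by blast

lemma prefix_chain:
  assumes "\<And>i. \<exists>a. f (Suc i) = f i @ [a]"
  shows "i \<le> j \<Longrightarrow> \<exists>r. f j = f i @ r"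
proof (induction j rule: dec_induct)
  case base then show ?case by auto
next
  case (step n)
  then show ?case using assms[of n] by (metis append_assoc)
qed

lemma wqo_wtree:
  assumes wqo: "wqo_on le A" and XA: "X \<subseteq> A"
  shows "wtree (antichain_seqs le X)"
proof
  show "\<And>s a. s @ [a] \<in> antichain_seqs le X \<Longrightarrow> s \<in> antichain_seqs le X" by (rule ac_pre)
next
  let ?T = "antichain_seqs le X"
  show "wf {(s @ [a], s) |s a. s @ [a] \<in> ?T}"
  proof (rule ccontr)
    assume "\<not> ?thesis"
    then obtain f where f: "\<And>i. (f (Suc i), f i) \<in> {(s @ [a], s) |s a. s @ [a] \<in> ?T}"
      using wf_iff_no_infinite_down_chain by blast
    define b where "b i = last (f (Suc i))" for i
    have fs: "f (Suc i) = f i @ [b i]" "f (Suc i) \<in> ?T" for i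
      using f[of i] unfolding b_def by auto
    have ex: "\<And>i. \<exists>a. f (Suc i) = f i @ [a]" using fs by blast
    have bA: "b i \<in> A" for i using fs(2)[of i] fs(1)[of i] XA by (auto simp: ac_mem)
    have inc: "\<not> le (b i) (b j)" if ij: "i < j" for i j
    proof -
      obtain r where r: "f j = f (Suc i) @ r" using prefix_chain[where f=f, OF ex, of "Suc i" j] ij by auto
      have "f (Suc j) = f i @ [b i] @ (r @ [b j])" using fs(1)[of j] fs(1)[of i] r by simp
      then have "sorted_wrt (incomp le) (f i @ [b i] @ (r @ [b j]))" using fs(2)[of j] by (simp add: ac_mem)
      then have "incomp le (b i) (b j)" by (simp add: sorted_wrt_append)
      then show ?thesis by (simp add: incomp_def)
    qed
    from wqo bA obtain i j where "i < j" "le (b i) (b j)" unfolding wqo_on_def by blast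
    then show False using inc by blast
  qed
qed

definition OF :: "'c rel \<Rightarrow> ('c \<Rightarrow> nat) set" where
  "OF g = {f. finite {x. f x \<noteq> 0} \<and> {x. f x \<noteq> 0} \<subseteq> Field g}"

lemma oe_mem: "(f, h) \<in> omega_exp g \<longleftrightarrow> f \<in> OF g \<and> h \<in> OF g \<and>
   (f = h \<or> (\<exists>x. f x < h x \<and> (\<forall>y. f y \<noteq> h y \<longrightarrow> (y, x) \<in> g)))"
  by (simp add: omega_exp_def OF_def Let_def)

lemma Field_oe: "Field (omega_exp g) = OF g"
proof
  show "Field (omega_exp g) \<subseteq> OF g" unfolding Field_def using oe_mem by fastforce
  show "OF g \<subseteq> Field (omega_exp g)" unfolding Field_def using oe_mem by fastforce
qed

lemma OF_add: "f \<in> OF g \<Longrightarrow> h \<in> OF g \<Longrightarrow> (\<lambda>p. f p + h p) \<in> OF g"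
proof -
  assume a: "f \<in> OF g" "h \<in> OF g"
  have "{x. f x + h x \<noteq> 0} \<subseteq> {x. f x \<noteq> 0} \<union> {x. h x \<noteq> 0}" by auto
  then show ?thesis using a unfolding OF_def by (auto intro: finite_subset)
qed

lemma oe_add:
  assumes "(f', f) \<in> omega_exp g" "f' \<noteq> f" "h \<in> OF g"
  shows "((\<lambda>p. f' p + h p), (\<lambda>p. f p + h p)) \<in> omega_exp g \<and> (\<lambda>p. f' p + h p) \<noteq> (\<lambda>p. f p + h p)"
proof -
  from assms(1,2) obtain x where x: "f' x < f x" "\<forall>y. f' y \<noteq> f y \<longrightarrow> (y, x) \<in> g"
    "f' \<in> OF g" "f \<in> OF g" using oe_mem by blast
  have ne: "(\<lambda>p. f' p + h p) \<noteq> (\<lambda>p. f p + h p)"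
  proof
    assume "(\<lambda>p. f' p + h p) = (\<lambda>p. f p + h p)"
    then have "f' x + h x = f x + h x" by meson
    then show False using x(1) by simp
  qed
  have "(\<lambda>p. f' p + h p) \<in> OF g" "(\<lambda>p. f p + h p) \<in> OF g" using OF_add x assms(3) by auto
  moreover have "f' x + h x < f x + h x" using x(1) by simp
  moreover have "\<forall>y. f' y + h y \<noteq> f y + h y \<longrightarrow> (y, x) \<in> g" using x(2) by auto
  ultimately show ?thesis using ne oe_mem[of "\<lambda>p. f' p + h p" "\<lambda>p. f p + h p" g] by blast
qed

lemma labels_sub: "labels W T' \<phi> \<Longrightarrow> T \<subseteq> T' \<Longrightarrow> labels W T \<phi>"
  unfolding labels_def by blast

lemma good_union:
  assumes "labels (omega_exp g) (antichain_seqs le Y) \<phi>1" "labels (omega_exp g) (antichain_seqs le Z) \<phi>2"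
  shows "\<exists>\<phi>. labels (omega_exp g) (antichain_seqs le (Y \<union> Z)) \<phi>"
proof -
  let ?fY = "filter (\<lambda>a. a \<in> Y)" and ?fZ = "filter (\<lambda>a. a \<notin> Y)"
  define \<phi> where "\<phi> s = (\<lambda>p. \<phi>1 (?fY s) p + \<phi>2 (?fZ s) p)" for s
  have fYm: "?fY s \<in> antichain_seqs le Y" if "s \<in> antichain_seqs le (Y \<union> Z)" for s
    using that by (auto simp: ac_mem sorted_wrt_filter)
  have fZm: "?fZ s \<in> antichain_seqs le Z" if "s \<in> antichain_seqs le (Y \<union> Z)" for s
    using that by (auto simp: ac_mem sorted_wrt_filter)
  have F1: "\<phi>1 (?fY s) \<in> OF g" if "s \<in> antichain_seqs le (Y \<union> Z)" for s
    using assms(1) fYm[OF that] Field_oe unfolding labels_def by blast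
  have F2: "\<phi>2 (?fZ s) \<in> OF g" if "s \<in> antichain_seqs le (Y \<union> Z)" for s
    using assms(2) fZm[OF that] Field_oe unfolding labels_def by blast
  have "labels (omega_exp g) (antichain_seqs le (Y \<union> Z)) \<phi>"
    unfolding labels_def
  proof (rule conjI; intro allI impI ballI)
    fix s assume "s \<in> antichain_seqs le (Y \<union> Z)"
    then show "\<phi> s \<in> Field (omega_exp g)" unfolding \<phi>_def Field_oe using OF_add F1 F2 by blast
  next
    fix s a assume sa: "s @ [a] \<in> antichain_seqs le (Y \<union> Z)"
    then have s: "s \<in> antichain_seqs le (Y \<union> Z)" by (rule ac_pre)
    show "(\<phi> (s @ [a]), \<phi> s) \<in> omega_exp g \<and> \<phi> (s @ [a]) \<noteq> \<phi> s"
    proof (cases "a \<in> Y")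
      case True
      then have "?fY s @ [a] \<in> antichain_seqs le Y" using fYm[OF sa] by simp
      then have "(\<phi>1 (?fY s @ [a]), \<phi>1 (?fY s)) \<in> omega_exp g" "\<phi>1 (?fY s @ [a]) \<noteq> \<phi>1 (?fY s)"
        using assms(1) unfolding labels_def by auto
      then show ?thesis using oe_add F2[OF s] True unfolding \<phi>_def by simp
    next
      case False
      then have "?fZ s @ [a] \<in> antichain_seqs le Z" using fZm[OF sa] by simp
      then have "(\<phi>2 (?fZ s @ [a]), \<phi>2 (?fZ s)) \<in> omega_exp g" "\<phi>2 (?fZ s @ [a]) \<noteq> \<phi>2 (?fZ s)"
        using assms(2) unfolding labels_def by auto
      from oe_add[OF this F1[OF s]] False show ?thesis unfolding \<phi>_def by (simp add: add.commute)
    qed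
  qed
  then show ?thesis by blast
qed

lemma good_chain:
  assumes "\<forall>a\<in>K. \<forall>b\<in>K. le a b \<or> le b a"
    and e: "(e0, e1) \<in> W" "e0 \<noteq> e1" "e0 \<in> Field W" "e1 \<in> Field W"
  shows "\<exists>\<phi>. labels W (antichain_seqs le K) \<phi>"
proof -
  have short: "s = []" if "s @ [a] \<in> antichain_seqs le K" for s a
  proof (rule ccontr)
    assume "s \<noteq> []"
    then obtain b s' where "s = b # s'" by (cases s) auto
    then have "incomp le b a" "b \<in> K" "a \<in> K" using that by (auto simp: ac_mem sorted_wrt_append)
    then show False using assms(1) unfolding incomp_def by blast
  qed
  define \<phi> where "\<phi> s = (if s = [] then e1 else e0)" for s :: "'a list"
  have "labels W (antichain_seqs le K) \<phi>"
    unfolding labels_def \<phi>_def using e short by auto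
  then show ?thesis by blast
qed




lemma WO_ac: assumes "wqo_on le A" "X \<subseteq> A" shows "Well_order (width_ord le X)"
proof -
  have "wtree (antichain_seqs le X)" by (rule wqo_wtree[OF assms])
  then show ?thesis unfolding width_ord_wo by (rule wtree.Well_order_wo)
qed

lemma G1_ac: assumes "wqo_on le A" "X \<subseteq> A" "labels W' (antichain_seqs le X) \<phi>" "Well_order W'"
  shows "(width_ord le X, W') \<in> ordLess"
proof -
  have "wtree (antichain_seqs le X)" by (rule wqo_wtree[OF assms(1,2)])
  then show ?thesis unfolding width_ord_wo using wtree.G1[OF _ ac_nil assms(3,4)] by blast
qed

lemma G2_ac: assumes "wqo_on le A" "X \<subseteq> A" "(width_ord le X, W') \<in> ordLess"
  shows "\<exists>\<phi>. labels W' (antichain_seqs le X) \<phi>"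
proof -
  have "wtree (antichain_seqs le X)" by (rule wqo_wtree[OF assms(1,2)])
  then show ?thesis using wtree.G2 assms(3) unfolding width_ord_wo by blast
qed

lemma MONO_ac:
  assumes wqo: "wqo_on le A" and XY: "X \<subseteq> Y" "Y \<subseteq> A"
  shows "(width_ord le X, width_ord le Y) \<in> ordLeq"
proof (rule ccontr)
  have WX: "Well_order (width_ord le X)" using WO_ac[OF wqo] XY by blast
  have WY: "Well_order (width_ord le Y)" using WO_ac[OF wqo] XY by blast
  assume "(width_ord le X, width_ord le Y) \<notin> ordLeq"
  then have "(width_ord le Y, width_ord le X) \<in> ordLess"
    using not_ordLeq_iff_ordLess[OF WY WX] by blast
  then obtain \<phi> where "labels (width_ord le X) (antichain_seqs le Y) \<phi>" using G2_ac[OF wqo XY(2)] by blast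
  then have "labels (width_ord le X) (antichain_seqs le X) \<phi>" using labels_sub ac_mono XY by blast
  then have "(width_ord le X, width_ord le X) \<in> ordLess" using G1_ac[OF wqo _ _ WX] XY by blast
  then show False using ordLess_irreflexive by blast
qed



theorem mainTheorem8:
  fixes le :: "'a \<Rightarrow> 'a \<Rightarrow> bool" and A :: "'a set"
  assumes "wqo_on le A"
    and "(natLeq, width_ord le A) \<in> ordLeq"
    and "add_indecomposable (width_ord le A)"
  shows "\<exists>C \<subseteq> A. (width_ord le C, width_ord le A) \<in> ordIso \<and> transferable le C"
proof -
  note wqo = assms(1)
  obtain \<gamma> :: "'a list set rel" where "Well_order \<gamma>" and iso: "(width_ord le A, omega_exp \<gamma>) \<in> ordIso"
    using assms(3) unfolding add_indecomposable_def by blast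
  define W where "W = omega_exp \<gamma>"
  have isoW: "(width_ord le A, W) \<in> ordIso" using iso W_def by simp
  have WW: "Well_order W" using isoW unfolding ordIso_def by blast
  define good where "good X \<longleftrightarrow> (\<exists>\<phi>. labels W (antichain_seqs le X) \<phi>)" for X
  note WOX = WO_ac[OF wqo] and G1 = G1_ac[OF wqo] and G2 = G2_ac[OF wqo] and MONO = MONO_ac[OF wqo]
  have KEY: "(width_ord le X, width_ord le A) \<in> ordIso" if X: "X \<subseteq> A" "\<not> good X" for X
  proof -
    have "(width_ord le X, W) \<notin> ordLess" using G2 X unfolding good_def by blast
    then have "(W, width_ord le X) \<in> ordLeq" using not_ordLess_iff_ordLeq[OF WW WOX[OF X(1)]] by blast
    then have "(width_ord le A, width_ord le X) \<in> ordLeq" using isoW ordIso_ordLeq_trans by blast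
    moreover have "(width_ord le X, width_ord le A) \<in> ordLeq" using MONO X by blast
    ultimately show ?thesis using ordIso_iff_ordLeq by blast
  qed
  have notgoodA: "\<not> good A"
  proof
    assume "good A"
    then have "(width_ord le A, W) \<in> ordLess" using G1 WW unfolding good_def by blast
    then show False using isoW not_ordLess_ordIso by blast
  qed
  obtain e0 e1 where e: "(e0, e1) \<in> W" "e0 \<noteq> e1" "e0 \<in> Field W" "e1 \<in> Field W"
  proof -
    have "(natLeq, W) \<in> ordLeq" using assms(2) isoW ordLeq_ordIso_trans by blast
    then obtain g where emb: "embed natLeq W g" unfolding ordLeq_def by blast
    have inj: "inj_on g (Field natLeq)" using embed_inj_on[OF natLeq_Well_order emb] .
    have img: "g ` Field natLeq \<subseteq> Field W" using embed_Field[OF emb] .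
    have d: "g 0 \<noteq> g 1" "g 0 \<in> Field W" "g 1 \<in> Field W"
      using inj img unfolding Field_natLeq inj_on_def by auto
    have "total_on (Field W) W" using WW unfolding well_order_on_def linear_order_on_def by blast
    then have "(g 0, g 1) \<in> W \<or> (g 1, g 0) \<in> W" using d unfolding total_on_def by blast
    then show thesis using that[of "g 0" "g 1"] that[of "g 1" "g 0"] d by auto
  qed
  have good_sub: "good X" if XY: "X \<subseteq> Y" and gY: "good Y" for X Y
  proof -
    obtain \<phi> where "labels W (antichain_seqs le Y) \<phi>" using gY unfolding good_def by blast
    then have "labels W (antichain_seqs le X) \<phi>" by (rule labels_sub[OF _ ac_mono[OF XY]])
    then show ?thesis unfolding good_def by blast
  qed
  have good_un: "good (Y \<union> Z)" if gY: "good Y" and gZ: "good Z" for Y Z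
  proof -
    obtain \<phi>1 where 1: "labels (omega_exp \<gamma>) (antichain_seqs le Y) \<phi>1" using gY unfolding good_def W_def by blast
    obtain \<phi>2 where 2: "labels (omega_exp \<gamma>) (antichain_seqs le Z) \<phi>2" using gZ unfolding good_def W_def by blast
    show ?thesis using good_union[OF 1 2] unfolding good_def W_def .
  qed
  have good_ch: "good K" if "\<forall>a\<in>K. \<forall>b\<in>K. le a b \<or> le b a" for K
    unfolding good_def by (rule good_chain[OF that e])
  define dc where "dc D \<longleftrightarrow> D \<subseteq> A \<and> (\<forall>y\<in>A. \<forall>z\<in>D. le y z \<longrightarrow> y \<in> D)" for D
  define R where "R = {(D, D'). D \<subset> D' \<and> dc D \<and> dc D'}"
  have wfR: "wf R"
  proof (rule ccontr)
    assume "\<not> wf R"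
    then obtain f where f: "\<And>i. (f (Suc i), f i) \<in> R" using wf_iff_no_infinite_down_chain by blast
    have dec: "i \<le> j \<Longrightarrow> f j \<subseteq> f i" for i j
    proof (induction j rule: dec_induct)
      case base then show ?case by simp
    next
      case (step n) then show ?case using f[of n] unfolding R_def by blast
    qed
    have "\<exists>x. x \<in> f i \<and> x \<notin> f (Suc i)" for i using f[of i] unfolding R_def by blast
    then obtain x where x: "\<And>i. x i \<in> f i \<and> x i \<notin> f (Suc i)"
      using choice[of "\<lambda>i y. y \<in> f i \<and> y \<notin> f (Suc i)"] by blast
    have xA: "x i \<in> A" for i using x[of i] f[of i] unfolding R_def dc_def by blast
    from wqo xA obtain i j where ij: "i < j" "le (x i) (x j)" unfolding wqo_on_def by blast
    have "x j \<in> f (Suc i)" using dec[of "Suc i" j] ij x[of j] by auto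
    moreover have "dc (f (Suc i))" using f[of i] unfolding R_def by blast
    ultimately have "x i \<in> f (Suc i)" using ij xA unfolding dc_def by blast
    then show False using x by blast
  qed
  have "A \<in> {D. dc D \<and> \<not> good D}" using notgoodA unfolding dc_def by blast
  then obtain C where C0: "C \<in> {D. dc D \<and> \<not> good D}"
    and minC: "\<And>D. (D, C) \<in> R \<Longrightarrow> D \<notin> {D. dc D \<and> \<not> good D}"
    by (rule wfE_min[OF wfR]) blast
  then have C: "dc C" "\<not> good C" by auto
  have CA: "C \<subseteq> A" using C unfolding dc_def by blast
  have minC': "dc D \<Longrightarrow> D \<subset> C \<Longrightarrow> good D" for D using minC C unfolding R_def by blast
  have trA: "\<And>x y z. x \<in> A \<Longrightarrow> y \<in> A \<Longrightarrow> z \<in> A \<Longrightarrow> le x y \<Longrightarrow> le y z \<Longrightarrow> le x z"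
    using wqo unfolding wqo_on_def by blast
  have rfA: "\<And>x. x \<in> A \<Longrightarrow> le x x" using wqo unfolding wqo_on_def by blast
  have goodDx: "good {y \<in> C. le y x}" if xC: "x \<in> C" for x
  proof -
    let ?D = "{y \<in> C. le y x}"
    have dcD: "dc ?D" unfolding dc_def
    proof (intro conjI ballI impI)
      show "?D \<subseteq> A" using CA by blast
    next
      fix y z assume "y \<in> A" "z \<in> ?D" "le y z"
      then show "y \<in> ?D" using C(1) CA trA[of y z x] xC unfolding dc_def by blast
    qed
    show ?thesis
    proof (cases "?D = C")
      case False
      then show ?thesis using minC' dcD by blast
    next
      case True
      let ?E = "{y \<in> C. \<not> le x y}" and ?K = "{y \<in> C. le x y}"
      have "dc ?E" unfolding dc_def
      proof (intro conjI ballI impI)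
        show "?E \<subseteq> A" using CA by blast
      next
        fix y z assume "y \<in> A" "z \<in> ?E" "le y z"
        then show "y \<in> ?E" using C(1) CA trA[of x y z] xC unfolding dc_def by blast
      qed
      moreover have "x \<notin> ?E" using rfA xC CA by blast
      ultimately have gE: "good ?E" using minC' xC by blast
      have "\<forall>a\<in>?K. \<forall>b\<in>?K. le a b \<or> le b a"
      proof (intro ballI)
        fix a b assume a: "a \<in> ?K" and b: "b \<in> ?K"
        then have "le a x" using True by blast
        then show "le a b \<or> le b a" using trA[of a x b] a b xC CA by blast
      qed
      then have gK: "good ?K" using good_ch by blast
      have "C = ?E \<union> ?K" by blast
      then have "good C" using good_un[OF gE gK] by simp
      then show ?thesis using C by blast
    qed
  qed
  have isoC: "(width_ord le C, width_ord le A) \<in> ordIso" using KEY CA C by blast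
  have "transferable le C"
    unfolding transferable_def
  proof (intro allI impI)
    fix F assume F: "finite F \<and> F \<subseteq> C"
    let ?S = "{y \<in> C. \<forall>x\<in>F. \<not> le y x}"
    have finF: "finite F" and FC: "F \<subseteq> C" using F by auto
    have gU: "good (\<Union>x\<in>F. {y \<in> C. le y x})" using finF FC
    proof (induction F rule: finite_induct)
      case empty
      have "good {}" by (rule good_ch) simp
      then show ?case by simp
    next
      case (insert x F)
      have xC: "x \<in> C" and FC': "F \<subseteq> C" using insert.prems by auto
      have g1: "good {y \<in> C. le y x}" by (rule goodDx[OF xC])
      have g2: "good (\<Union>x\<in>F. {y \<in> C. le y x})" by (rule insert.IH[OF FC'])
      have "(\<Union>x\<in>insert x F. {y \<in> C. le y x}) = {y \<in> C. le y x} \<union> (\<Union>x\<in>F. {y \<in> C. le y x})"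
        by simp
      then show ?case using good_un[OF g1 g2] by simp
    qed
    have "\<not> good ?S"
    proof
      assume "good ?S"
      then have gSU: "good (?S \<union> (\<Union>x\<in>F. {y \<in> C. le y x}))" by (rule good_un[OF _ gU])
      have CS: "C \<subseteq> ?S \<union> (\<Union>x\<in>F. {y \<in> C. le y x})" by blast
      have "good C" by (rule good_sub[OF CS gSU])
      then show False using C(2) by blast
    qed
    moreover have "?S \<subseteq> A" using CA by blast
    ultimately have "(width_ord le ?S, width_ord le A) \<in> ordIso" using KEY by blast
    then show "(width_ord le ?S, width_ord le C) \<in> ordIso"
      using ordIso_transitive[OF _ ordIso_symmetric[OF isoC]] by blast
  qed
  then show ?thesis using CA isoC by blast
qed


end
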